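(* Let $G$ be a concurrent game structure with a set $F\subseteq S$ of safe states, let $v$ be a valuation, and let $(\overline{G}_v,\overline{F})=\mathrm{TB}(G,v,F)$. Let $\overline{A}$ be the set of almost-sure winning states in $\overline{G}_v$ for $\mathrm{Safe}(\overline{F})$, and $\overline{\pi}_1$ a pure memoryless almost-sure winning strategy from $\overline{A}$ in $\overline{G}_v$. Let $\pi_1$ be a memoryless player-1 strategy in $G$ such that for every $s\in\overline{A}\cap S$, if $\overline{\pi}_1(s)=(s,A,B)$ then $\pi_1(s)\in\mathrm{OptSel}(v,s)$, $\mathrm{supp}(\pi_1(s))=A$ and $\mathrm{CountOpt}(v,s,\pi_1(s))=B$. Let $\pi_2$ be a pure memoryless player-2 strategy. If $\pi_2(s)\in\mathrm{CountOpt}(v,s,\pi_1(s))$ for all $s\in\overline{A}\cap S$, then $\Pr_s^{\pi_1,\pi_2}(\mathrm{Safe}(F))=1$ for all $s\in\overline{A}\cap S$.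
   Context: Concurrent game structure $G=(S,M,\Gamma_1,\Gamma_2,\delta)$: finite states, finite moves, nonempty move sets $\Gamma_i(s)$, $\delta(s,a_1,a_2)\in\mathrm{Distr}(S)$ (simultaneous independent moves), $\mathrm{Dest}(s,a_1,a_2)=\mathrm{supp}\,\delta(s,a_1,a_2)$. A selector at $s$ for player $i$ is a distribution on $\Gamma_i(s)$; memoryless strategies play a fixed selector at each state; pure means point masses. $\mathrm{Safe}(F)$: plays staying in $F$ forever. A valuation is $v:S\to[0,1]$. $\mathrm{Pre}_{\xi_1,\xi_2}(v)(s)=\sum_{a,b}\sum_tv(t)\delta(s,a,b)(t)\xi_1(s)(a)\xi_2(s)(b)$; $\mathrm{Pre}_{\xi_1,b}$ with player 2 playing $b$; $\mathrm{Pre}_{1:\xi_1}(v)(s)=\inf_{\xi_2}\mathrm{Pre}_{\xi_1,\xi_2}(v)(s)$; $\mathrm{Pre}_1(v)(s)=\sup_{\xi_1}\mathrm{Pre}_{1:\xi_1}(v)(s)$. $\mathrm{OptSel}(v,s)=\{\xi_1:\mathrm{Pre}_{1:\xi_1}(v)(s)=\mathrm{Pre}_1(v)(s)\}$; $\mathrm{CountOpt}(v,s,\xi_1)=\{b\in\Gamma_2(s):\mathrm{Pre}_{\xi_1,b}(v)(s)=\mathrm{Pre}_1(v)(s)\}$; $\mathrm{OptSelCount}(v,s)$ = pairs $(A,B)$ such that some $\xi_1\in\mathrm{OptSel}(v,s)$ has support $A$ and $\mathrm{CountOpt}(v,s,\xi_1)=B$. $\mathrm{TB}(G,v,F)=(\overline{G}_v,\overline{F})$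 is the turn-based stochastic game (player $i$ chooses the successor at its states; random states choose uniformly among successors) with player-1 states $S$, player-2 states $(s,A,B)$ for $(A,B)\in\mathrm{OptSelCount}(v,s)$, random states $(s,A,b)$ for such $(A,B)$ and $b\in B$, edges $s\to(s,A,B)$, $(s,A,B)\to(s,A,b)$ for $b\in B$, $(s,A,b)\to t$ for $t\in\bigcup_{a\in A}\mathrm{Dest}(s,a,b)$; $\overline{F}=F\cup\{(s,A,B):s\in F\}\cup\{(s,A,b):s\in F\}$. A state is almost-sure winning for $\mathrm{Safe}(\overline{F})$ if player 1 has a strategy ensuring $\mathrm{Safe}(\overline{F})$ with probability 1 from it against all player-2 strategies; an almost-sure winning strategy from $\overline{A}$ does so from every state of $\overline{A}$. *)

theory Defs
  imports "HOL-Probability.Probability"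
begin

definition cgs ::
  "'s set \<Rightarrow> 'm set \<Rightarrow> ('s \<Rightarrow> 'm set) \<Rightarrow> ('s \<Rightarrow> 'm set) \<Rightarrow> ('s \<Rightarrow> 'm \<Rightarrow> 'm \<Rightarrow> 's pmf) \<Rightarrow> bool"
where
  "cgs S M \<Gamma>1 \<Gamma>2 \<delta> \<longleftrightarrow> finite S \<and> finite M \<and>
     (\<forall>s\<in>S. \<Gamma>1 s \<noteq> {} \<and> \<Gamma>1 s \<subseteq> M \<and> \<Gamma>2 s \<noteq> {} \<and> \<Gamma>2 s \<subseteq> M) \<and>
     (\<forall>s\<in>S. \<forall>a\<in>\<Gamma>1 s. \<forall>b\<in>\<Gamma>2 s. set_pmf (\<delta> s a b) \<subseteq> S)"

definition Dest :: "('s \<Rightarrow> 'm \<Rightarrow> 'm \<Rightarrow> 's pmf) \<Rightarrow> 's \<Rightarrow> 'm \<Rightarrow> 'm \<Rightarrow> 's set" where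
  "Dest \<delta> s a b = set_pmf (\<delta> s a b)"

definition sel :: "('s \<Rightarrow> 'm set) \<Rightarrow> 's \<Rightarrow> 'm pmf set" where
  "sel \<Gamma> s = {p. set_pmf p \<subseteq> \<Gamma> s}"

definition Pre2 ::
  "'s set \<Rightarrow> ('s \<Rightarrow> 'm set) \<Rightarrow> ('s \<Rightarrow> 'm set) \<Rightarrow> ('s \<Rightarrow> 'm \<Rightarrow> 'm \<Rightarrow> 's pmf)
    \<Rightarrow> ('s \<Rightarrow> real) \<Rightarrow> 's \<Rightarrow> 'm pmf \<Rightarrow> 'm pmf \<Rightarrow> real"
where
  "Pre2 S \<Gamma>1 \<Gamma>2 \<delta> v s p q =
     (\<Sum>a\<in>\<Gamma>1 s. \<Sum>b\<in>\<Gamma>2 s. \<Sum>t\<in>S. v t * pmf (\<delta> s a b) t * pmf p a * pmf q b)"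

definition Pre1sel ::
  "'s set \<Rightarrow> ('s \<Rightarrow> 'm set) \<Rightarrow> ('s \<Rightarrow> 'm set) \<Rightarrow> ('s \<Rightarrow> 'm \<Rightarrow> 'm \<Rightarrow> 's pmf)
    \<Rightarrow> ('s \<Rightarrow> real) \<Rightarrow> 's \<Rightarrow> 'm pmf \<Rightarrow> real"
where
  "Pre1sel S \<Gamma>1 \<Gamma>2 \<delta> v s p = (INF q \<in> sel \<Gamma>2 s. Pre2 S \<Gamma>1 \<Gamma>2 \<delta> v s p q)"

definition Pre1 ::
  "'s set \<Rightarrow> ('s \<Rightarrow> 'm set) \<Rightarrow> ('s \<Rightarrow> 'm set) \<Rightarrow> ('s \<Rightarrow> 'm \<Rightarrow> 'm \<Rightarrow> 's pmf)
    \<Rightarrow> ('s \<Rightarrow> real) \<Rightarrow> 's \<Rightarrow> real"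
where
  "Pre1 S \<Gamma>1 \<Gamma>2 \<delta> v s = (SUP p \<in> sel \<Gamma>1 s. Pre1sel S \<Gamma>1 \<Gamma>2 \<delta> v s p)"

definition OptSel ::
  "'s set \<Rightarrow> ('s \<Rightarrow> 'm set) \<Rightarrow> ('s \<Rightarrow> 'm set) \<Rightarrow> ('s \<Rightarrow> 'm \<Rightarrow> 'm \<Rightarrow> 's pmf)
    \<Rightarrow> ('s \<Rightarrow> real) \<Rightarrow> 's \<Rightarrow> 'm pmf set"
where
  "OptSel S \<Gamma>1 \<Gamma>2 \<delta> v s =
     {p \<in> sel \<Gamma>1 s. Pre1sel S \<Gamma>1 \<Gamma>2 \<delta> v s p = Pre1 S \<Gamma>1 \<Gamma>2 \<delta> v s}"

definition CountOpt ::
  "'s set \<Rightarrow> ('s \<Rightarrow> 'm set) \<Rightarrow> ('s \<Rightarrow> 'm set) \<Rightarrow> ('s \<Rightarrow> 'm \<Rightarrow> 'm \<Rightarrow> 's pmf)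
    \<Rightarrow> ('s \<Rightarrow> real) \<Rightarrow> 's \<Rightarrow> 'm pmf \<Rightarrow> 'm set"
where
  "CountOpt S \<Gamma>1 \<Gamma>2 \<delta> v s p =
     {b \<in> \<Gamma>2 s. Pre2 S \<Gamma>1 \<Gamma>2 \<delta> v s p (return_pmf b) = Pre1 S \<Gamma>1 \<Gamma>2 \<delta> v s}"

definition OptSelCount ::
  "'s set \<Rightarrow> ('s \<Rightarrow> 'm set) \<Rightarrow> ('s \<Rightarrow> 'm set) \<Rightarrow> ('s \<Rightarrow> 'm \<Rightarrow> 'm \<Rightarrow> 's pmf)
    \<Rightarrow> ('s \<Rightarrow> real) \<Rightarrow> 's \<Rightarrow> ('m set \<times> 'm set) set"
where
  "OptSelCount S \<Gamma>1 \<Gamma>2 \<delta> v s =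
     {(A, B). \<exists>p \<in> OptSel S \<Gamma>1 \<Gamma>2 \<delta> v s. set_pmf p = A \<and> CountOpt S \<Gamma>1 \<Gamma>2 \<delta> v s p = B}"

text \<open>Probability of Safe(F) in G under memoryless strategies pi1 (randomized) and
 pi2 (pure): the plays form a Markov chain; the probability of staying in F forever
 is the infimum (= limit, by continuity from above) of the probabilities of staying
 in F during the first n steps.\<close>

fun safe_steps_cgs ::
  "('s \<Rightarrow> 'm \<Rightarrow> 'm \<Rightarrow> 's pmf) \<Rightarrow> 's set \<Rightarrow> ('s \<Rightarrow> 'm pmf) \<Rightarrow> ('s \<Rightarrow> 'm) \<Rightarrow> nat \<Rightarrow> 's \<Rightarrow> real"
where
  "safe_steps_cgs \<delta> F \<pi>1 \<pi>2 0 s = (if s \<in> F then 1 else 0)"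
| "safe_steps_cgs \<delta> F \<pi>1 \<pi>2 (Suc n) s =
     (if s \<in> F then
        measure_pmf.expectation (bind_pmf (\<pi>1 s) (\<lambda>a. \<delta> s a (\<pi>2 s)))
          (safe_steps_cgs \<delta> F \<pi>1 \<pi>2 n)
      else 0)"

definition prob_safe_cgs ::
  "('s \<Rightarrow> 'm \<Rightarrow> 'm \<Rightarrow> 's pmf) \<Rightarrow> 's set \<Rightarrow> ('s \<Rightarrow> 'm pmf) \<Rightarrow> ('s \<Rightarrow> 'm) \<Rightarrow> 's \<Rightarrow> real"
where
  "prob_safe_cgs \<delta> F \<pi>1 \<pi>2 s = (INF n. safe_steps_cgs \<delta> F \<pi>1 \<pi>2 n s)"

datatype ('s, 'm) tbv =
    P1 's
  | P2 's "'m set" "'m set"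
  | Rnd 's "'m set" 'm

definition TB_states ::
  "'s set \<Rightarrow> ('s \<Rightarrow> 'm set) \<Rightarrow> ('s \<Rightarrow> 'm set) \<Rightarrow> ('s \<Rightarrow> 'm \<Rightarrow> 'm \<Rightarrow> 's pmf)
    \<Rightarrow> ('s \<Rightarrow> real) \<Rightarrow> ('s, 'm) tbv set"
where
  "TB_states S \<Gamma>1 \<Gamma>2 \<delta> v =
     P1 ` S
   \<union> {P2 s A B | s A B. s \<in> S \<and> (A, B) \<in> OptSelCount S \<Gamma>1 \<Gamma>2 \<delta> v s}
   \<union> {Rnd s A b | s A B b. s \<in> S \<and> (A, B) \<in> OptSelCount S \<Gamma>1 \<Gamma>2 \<delta> v s \<and> b \<in> B}"

fun TB_succ ::
  "'s set \<Rightarrow> ('s \<Rightarrow> 'm set) \<Rightarrow> ('s \<Rightarrow> 'm set) \<Rightarrow> ('s \<Rightarrow> 'm \<Rightarrow> 'm \<Rightarrow> 's pmf)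
    \<Rightarrow> ('s \<Rightarrow> real) \<Rightarrow> ('s, 'm) tbv \<Rightarrow> ('s, 'm) tbv set"
where
  "TB_succ S \<Gamma>1 \<Gamma>2 \<delta> v (P1 s) =
     {P2 s A B | A B. (A, B) \<in> OptSelCount S \<Gamma>1 \<Gamma>2 \<delta> v s}"
| "TB_succ S \<Gamma>1 \<Gamma>2 \<delta> v (P2 s A B) = {Rnd s A b | b. b \<in> B}"
| "TB_succ S \<Gamma>1 \<Gamma>2 \<delta> v (Rnd s A b) = P1 ` (\<Union>a\<in>A. Dest \<delta> s a b)"

definition TB_safe :: "'s set \<Rightarrow> ('s, 'm) tbv set" where
  "TB_safe F = P1 ` F \<union> {P2 s A B | s A B. s \<in> F} \<union> {Rnd s A b | s A b. s \<in> F}"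

fun is_P1 :: "('s, 'm) tbv \<Rightarrow> bool" where
  "is_P1 (P1 _) = True" | "is_P1 _ = False"

fun is_P2 :: "('s, 'm) tbv \<Rightarrow> bool" where
  "is_P2 (P2 _ _ _) = True" | "is_P2 _ = False"

text \<open>General (history-dependent, randomized) strategies in the turn-based game:
 a history is a nonempty list of vertices, the strategy chooses a distribution over
 the successors of the last vertex whenever that vertex belongs to the player.\<close>

definition tb_strategy ::
  "('s, 'm) tbv set \<Rightarrow> (('s, 'm) tbv \<Rightarrow> bool) \<Rightarrow> (('s, 'm) tbv \<Rightarrow> ('s, 'm) tbv set)
     \<Rightarrow> (('s, 'm) tbv list \<Rightarrow> ('s, 'm) tbv pmf) \<Rightarrow> bool"
where
  "tb_strategy V owner succ \<sigma> \<longleftrightarrow>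
     (\<forall>h. h \<noteq> [] \<and> last h \<in> V \<and> owner (last h) \<longrightarrow> set_pmf (\<sigma> h) \<subseteq> succ (last h))"

definition tb_next ::
  "(('s, 'm) tbv \<Rightarrow> ('s, 'm) tbv set) \<Rightarrow> (('s, 'm) tbv list \<Rightarrow> ('s, 'm) tbv pmf)
     \<Rightarrow> (('s, 'm) tbv list \<Rightarrow> ('s, 'm) tbv pmf) \<Rightarrow> ('s, 'm) tbv list \<Rightarrow> ('s, 'm) tbv pmf"
where
  "tb_next succ \<sigma>1 \<sigma>2 h =
     (case last h of
        P1 _ \<Rightarrow> \<sigma>1 h
      | P2 _ _ _ \<Rightarrow> \<sigma>2 h
      | Rnd _ _ _ \<Rightarrow> pmf_of_set (succ (last h)))"

fun tb_safe_steps ::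
  "(('s, 'm) tbv \<Rightarrow> ('s, 'm) tbv set) \<Rightarrow> ('s, 'm) tbv set
     \<Rightarrow> (('s, 'm) tbv list \<Rightarrow> ('s, 'm) tbv pmf) \<Rightarrow> (('s, 'm) tbv list \<Rightarrow> ('s, 'm) tbv pmf)
     \<Rightarrow> nat \<Rightarrow> ('s, 'm) tbv list \<Rightarrow> real"
where
  "tb_safe_steps succ Fb \<sigma>1 \<sigma>2 0 h = (if last h \<in> Fb then 1 else 0)"
| "tb_safe_steps succ Fb \<sigma>1 \<sigma>2 (Suc n) h =
     (if last h \<in> Fb then
        measure_pmf.expectation (tb_next succ \<sigma>1 \<sigma>2 h)
          (\<lambda>t. tb_safe_steps succ Fb \<sigma>1 \<sigma>2 n (h @ [t]))
      else 0)"

definition tb_prob_safe ::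
  "(('s, 'm) tbv \<Rightarrow> ('s, 'm) tbv set) \<Rightarrow> ('s, 'm) tbv set
     \<Rightarrow> (('s, 'm) tbv list \<Rightarrow> ('s, 'm) tbv pmf) \<Rightarrow> (('s, 'm) tbv list \<Rightarrow> ('s, 'm) tbv pmf)
     \<Rightarrow> ('s, 'm) tbv \<Rightarrow> real"
where
  "tb_prob_safe succ Fb \<sigma>1 \<sigma>2 x = (INF n. tb_safe_steps succ Fb \<sigma>1 \<sigma>2 n [x])"

definition tb_as_winning_from ::
  "('s, 'm) tbv set \<Rightarrow> (('s, 'm) tbv \<Rightarrow> ('s, 'm) tbv set) \<Rightarrow> ('s, 'm) tbv set
     \<Rightarrow> (('s, 'm) tbv list \<Rightarrow> ('s, 'm) tbv pmf) \<Rightarrow> ('s, 'm) tbv set \<Rightarrow> bool"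
where
  "tb_as_winning_from V succ Fb \<sigma>1 X \<longleftrightarrow>
     tb_strategy V is_P1 succ \<sigma>1 \<and>
     (\<forall>\<sigma>2. tb_strategy V is_P2 succ \<sigma>2 \<longrightarrow> (\<forall>x\<in>X. tb_prob_safe succ Fb \<sigma>1 \<sigma>2 x = 1))"

definition tb_as_win_set ::
  "('s, 'm) tbv set \<Rightarrow> (('s, 'm) tbv \<Rightarrow> ('s, 'm) tbv set) \<Rightarrow> ('s, 'm) tbv set \<Rightarrow> ('s, 'm) tbv set"
where
  "tb_as_win_set V succ Fb = {x \<in> V. \<exists>\<sigma>1. tb_as_winning_from V succ Fb \<sigma>1 {x}}"

definition pure_memoryless :: "(('s, 'm) tbv \<Rightarrow> ('s, 'm) tbv) \<Rightarrow> ('s, 'm) tbv list \<Rightarrow> ('s, 'm) tbv pmf"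
where
  "pure_memoryless f h = return_pmf (f (last h))"

end

theory Submission
  imports Defs
begin


lemma exp_le1:
  fixes f :: "'a \<Rightarrow> real"
  assumes "\<And>x. 0 \<le> f x" "\<And>x. f x \<le> 1"
  shows "0 \<le> measure_pmf.expectation p f \<and> measure_pmf.expectation p f \<le> 1"
proof
  show "0 \<le> measure_pmf.expectation p f" using assms by (simp add: integral_nonneg)
  have "integrable (measure_pmf p) f"
    by (rule measure_pmf.integrable_const_bound[where B=1]) (use assms in auto)
  then show "measure_pmf.expectation p f \<le> 1"
    by (intro measure_pmf.integral_le_const) (use assms in auto)
qed

lemma exp_eq1:
  fixes f :: "'a \<Rightarrow> real"
  assumes "\<And>x. x \<in> set_pmf p \<Longrightarrow> f x = 1"
  shows "measure_pmf.expectation p f = 1"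
proof -
  have "measure_pmf.expectation p f = measure_pmf.expectation p (\<lambda>_. 1)"
    by (intro integral_cong_AE) (use assms in \<open>auto simp: AE_measure_pmf_iff\<close>)
  then show ?thesis by simp
qed

lemma tb_bounds: "0 \<le> tb_safe_steps succ Fb \<sigma>1 \<sigma>2 n h \<and> tb_safe_steps succ Fb \<sigma>1 \<sigma>2 n h \<le> 1"
proof (induction n arbitrary: h)
  case 0 then show ?case by simp
next
  case (Suc n)
  show ?case using exp_le1[of "\<lambda>t. tb_safe_steps succ Fb \<sigma>1 \<sigma>2 n (h @ [t])"] Suc by auto
qed

lemma tb_shift:
  assumes "\<And>h. h \<noteq> [] \<Longrightarrow> \<sigma>1' (pre @ h) = \<sigma>1 h"
      and "\<And>h. h \<noteq> [] \<Longrightarrow> \<sigma>2' (pre @ h) = \<sigma>2 h"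
  shows "h \<noteq> [] \<Longrightarrow> tb_safe_steps succ Fb \<sigma>1' \<sigma>2' n (pre @ h) = tb_safe_steps succ Fb \<sigma>1 \<sigma>2 n h"
proof (induction n arbitrary: h)
  case 0 then show ?case by simp
next
  case (Suc n)
  have nx: "tb_next succ \<sigma>1' \<sigma>2' (pre @ h) = tb_next succ \<sigma>1 \<sigma>2 h"
    using Suc.prems assms by (auto simp: tb_next_def split: tbv.split)
  show ?case using Suc by (simp add: nx)
qed

lemma sum_avg_one:
  fixes g :: "'a \<Rightarrow> real"
  assumes "finite T" "T \<noteq> {}" "\<And>x. g x \<le> 1" "sum g T / card T = 1" "t \<in> T"
  shows "g t = 1"
proof (rule ccontr)
  assume "g t \<noteq> 1"
  then have "g t < 1" using assms(3)[of t] by simp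
  have "sum g T < sum (\<lambda>_. 1) T"
    by (rule sum_strict_mono_ex1) (use assms \<open>g t < 1\<close> in auto)
  then have "sum g T < card T" by simp
  moreover have "card T > 0" using assms by (simp add: card_gt_0_iff)
  ultimately show False using assms(4) by (simp add: field_simps)
qed


lemma Pre2_lin:
  "Pre2 S \<Gamma>1 \<Gamma>2 \<delta> v s p q =
   (\<Sum>b\<in>\<Gamma>2 s. (\<Sum>a\<in>\<Gamma>1 s. \<Sum>t\<in>S. v t * pmf (\<delta> s a b) t * pmf p a) * pmf q b)"
  unfolding Pre2_def by (subst sum.swap) (simp add: sum_distrib_right)

lemma CountOpt_ne:
  assumes fin: "finite (\<Gamma>2 s)" and ne: "\<Gamma>2 s \<noteq> {}"
    and opt: "Pre1sel S \<Gamma>1 \<Gamma>2 \<delta> v s p = Pre1 S \<Gamma>1 \<Gamma>2 \<delta> v s"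
  shows "CountOpt S \<Gamma>1 \<Gamma>2 \<delta> v s p \<noteq> {}"
proof -
  define d where "d b = (\<Sum>a\<in>\<Gamma>1 s. \<Sum>t\<in>S. v t * pmf (\<delta> s a b) t * pmf p a)" for b
  have P: "Pre2 S \<Gamma>1 \<Gamma>2 \<delta> v s p q = (\<Sum>b\<in>\<Gamma>2 s. d b * pmf q b)" for q
    unfolding Pre2_lin d_def by simp
  obtain b0 where b0: "b0 \<in> \<Gamma>2 s" "\<And>b. b \<in> \<Gamma>2 s \<Longrightarrow> d b0 \<le> d b"
  proof -
    have "\<exists>m\<in>d ` \<Gamma>2 s. \<not> (\<exists>x\<in>d ` \<Gamma>2 s. x < m)"
      by (rule ex_min_if_finite) (use fin ne in auto)
    then show ?thesis using that by (force simp: not_less)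
  qed
  have ret: "Pre2 S \<Gamma>1 \<Gamma>2 \<delta> v s p (return_pmf b) = d b" if "b \<in> \<Gamma>2 s" for b
  proof -
    have "(\<Sum>b'\<in>\<Gamma>2 s. d b' * pmf (return_pmf b) b') = (\<Sum>b'\<in>\<Gamma>2 s. if b' = b then d b else 0)"
      by (intro sum.cong) (auto simp: pmf_return)
    also have "\<dots> = d b" using that fin by simp
    finally show ?thesis by (simp add: P)
  qed
  have ge: "d b0 \<le> Pre2 S \<Gamma>1 \<Gamma>2 \<delta> v s p q" if "q \<in> sel \<Gamma>2 s" for q
  proof -
    have "d b0 = (\<Sum>b\<in>\<Gamma>2 s. d b0 * pmf q b)"
      using sum_pmf_eq_1[OF fin, of q] that by (simp add: sel_def sum_distrib_left[symmetric])
    also have "\<dots> \<le> (\<Sum>b\<in>\<Gamma>2 s. d b * pmf q b)"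
      by (intro sum_mono mult_right_mono) (auto simp: b0 pmf_nonneg)
    finally show ?thesis by (simp add: P)
  qed
  have "return_pmf b0 \<in> sel \<Gamma>2 s" using b0 by (simp add: sel_def)
  then have "Pre1sel S \<Gamma>1 \<Gamma>2 \<delta> v s p = d b0"
    unfolding Pre1sel_def
    by (intro cInf_eq_minimum[where z="d b0"]) (auto simp: ret[OF b0(1)] ge intro!: image_eqI[where x="return_pmf b0"])
  then have "b0 \<in> CountOpt S \<Gamma>1 \<Gamma>2 \<delta> v s p"
    using b0 opt ret by (simp add: CountOpt_def)
  then show ?thesis by blast
qed

theorem lemma12:
  fixes S :: "'s set" and M :: "'m set"
    and \<Gamma>1 \<Gamma>2 :: "'s \<Rightarrow> 'm set" and \<delta> :: "'s \<Rightarrow> 'm \<Rightarrow> 'm \<Rightarrow> 's pmf"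
    and F :: "'s set" and v :: "'s \<Rightarrow> real"
    and f1 :: "('s, 'm) tbv \<Rightarrow> ('s, 'm) tbv"
    and \<pi>1 :: "'s \<Rightarrow> 'm pmf" and \<pi>2 :: "'s \<Rightarrow> 'm"
  assumes G: "cgs S M \<Gamma>1 \<Gamma>2 \<delta>"
    and F: "F \<subseteq> S"
    and v: "\<forall>s\<in>S. 0 \<le> v s \<and> v s \<le> 1"
    and f1_move: "\<forall>x \<in> TB_states S \<Gamma>1 \<Gamma>2 \<delta> v. is_P1 x \<longrightarrow> f1 x \<in> TB_succ S \<Gamma>1 \<Gamma>2 \<delta> v x"
    and f1_win: "tb_as_winning_from (TB_states S \<Gamma>1 \<Gamma>2 \<delta> v) (TB_succ S \<Gamma>1 \<Gamma>2 \<delta> v) (TB_safe F) (pure_memoryless f1)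
                   (tb_as_win_set (TB_states S \<Gamma>1 \<Gamma>2 \<delta> v) (TB_succ S \<Gamma>1 \<Gamma>2 \<delta> v) (TB_safe F))"
    and \<pi>1_sel: "\<forall>s\<in>S. set_pmf (\<pi>1 s) \<subseteq> \<Gamma>1 s"
    and \<pi>1_TB: "\<forall>s\<in>S. P1 s \<in> tb_as_win_set (TB_states S \<Gamma>1 \<Gamma>2 \<delta> v) (TB_succ S \<Gamma>1 \<Gamma>2 \<delta> v) (TB_safe F) \<longrightarrow>
                 (\<forall>A B. f1 (P1 s) = P2 s A B \<longrightarrow>
                    \<pi>1 s \<in> OptSel S \<Gamma>1 \<Gamma>2 \<delta> v s \<and> set_pmf (\<pi>1 s) = A \<and>
                    CountOpt S \<Gamma>1 \<Gamma>2 \<delta> v s (\<pi>1 s) = B)"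
    and \<pi>2_sel: "\<forall>s\<in>S. \<pi>2 s \<in> \<Gamma>2 s"
    and \<pi>2_opt: "\<forall>s\<in>S. P1 s \<in> tb_as_win_set (TB_states S \<Gamma>1 \<Gamma>2 \<delta> v) (TB_succ S \<Gamma>1 \<Gamma>2 \<delta> v) (TB_safe F) \<longrightarrow>
                 \<pi>2 s \<in> CountOpt S \<Gamma>1 \<Gamma>2 \<delta> v s (\<pi>1 s)"
  shows "\<forall>s\<in>S. P1 s \<in> tb_as_win_set (TB_states S \<Gamma>1 \<Gamma>2 \<delta> v) (TB_succ S \<Gamma>1 \<Gamma>2 \<delta> v) (TB_safe F) \<longrightarrow>
           prob_safe_cgs \<delta> F \<pi>1 \<pi>2 s = 1"
proof -
  let ?V = "TB_states S \<Gamma>1 \<Gamma>2 \<delta> v"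
  let ?succ = "TB_succ S \<Gamma>1 \<Gamma>2 \<delta> v"
  let ?Fb = "TB_safe F :: ('s, 'm) tbv set"
  let ?W = "tb_as_win_set ?V ?succ ?Fb"
  let ?s1 = "pure_memoryless f1"
  have finM: "finite M" and G2: "\<forall>s\<in>S. \<Gamma>1 s \<noteq> {} \<and> \<Gamma>1 s \<subseteq> M \<and> \<Gamma>2 s \<noteq> {} \<and> \<Gamma>2 s \<subseteq> M"
    and Gd: "\<forall>s\<in>S. \<forall>a\<in>\<Gamma>1 s. \<forall>b\<in>\<Gamma>2 s. set_pmf (\<delta> s a b) \<subseteq> S"
    using G by (auto simp: cgs_def)
  have P2ne: "?succ (P2 s' A' B') \<noteq> {}" if "P2 s' A' B' \<in> ?V" for s' A' B'
  proof -
    from that have s': "s' \<in> S" and AB: "(A', B') \<in> OptSelCount S \<Gamma>1 \<Gamma>2 \<delta> v s'"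
      by (auto simp: TB_states_def)
    from AB obtain p where p: "p \<in> OptSel S \<Gamma>1 \<Gamma>2 \<delta> v s'" "CountOpt S \<Gamma>1 \<Gamma>2 \<delta> v s' p = B'"
      by (auto simp: OptSelCount_def)
    have "finite (\<Gamma>2 s')" using G2 s' finM finite_subset by blast
    moreover have "\<Gamma>2 s' \<noteq> {}" using G2 s' by blast
    ultimately have "B' \<noteq> {}" using CountOpt_ne[of \<Gamma>2 s' S \<Gamma>1 \<delta> v p] p by (auto simp: OptSel_def)
    then show ?thesis by auto
  qed
  define \<sigma>d :: "('s, 'm) tbv list \<Rightarrow> ('s, 'm) tbv pmf" where
    "\<sigma>d h = return_pmf (SOME y. y \<in> ?succ (last h))" for h
  have \<sigma>d_ok: "set_pmf (\<sigma>d h) \<subseteq> ?succ (last h)" if hV: "last h \<in> ?V" and hP: "is_P2 (last h)" for h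
  proof -
    obtain s' A' B' where l: "last h = P2 s' A' B'" using hP by (cases "last h") auto
    then have "?succ (last h) \<noteq> {}" using P2ne hV by simp
    then show ?thesis by (simp add: \<sigma>d_def some_in_eq)
  qed
  have \<sigma>d_strat: "tb_strategy ?V is_P2 ?succ \<sigma>d"
    using \<sigma>d_ok by (simp add: tb_strategy_def)
  have s1_strat: "tb_strategy ?V is_P1 ?succ ?s1"
    using f1_win by (simp add: tb_as_winning_from_def)
  have allone: "\<And>n. tb_safe_steps ?succ ?Fb ?s1 \<sigma>2 n [x] = 1"
    if "tb_strategy ?V is_P2 ?succ \<sigma>2" "x \<in> ?W" for \<sigma>2 x
  proof -
    fix n
    have "tb_prob_safe ?succ ?Fb ?s1 \<sigma>2 x = 1"
      using f1_win that by (simp add: tb_as_winning_from_def)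
    then have "(INF n. tb_safe_steps ?succ ?Fb ?s1 \<sigma>2 n [x]) = 1" by (simp add: tb_prob_safe_def)
    moreover have "(INF n. tb_safe_steps ?succ ?Fb ?s1 \<sigma>2 n [x]) \<le> tb_safe_steps ?succ ?Fb ?s1 \<sigma>2 n [x]"
      by (rule cINF_lower) (auto intro!: bdd_belowI[where m=0] simp: tb_bounds)
    ultimately show "tb_safe_steps ?succ ?Fb ?s1 \<sigma>2 n [x] = 1"
      using tb_bounds[of ?succ ?Fb ?s1 \<sigma>2 n "[x]"] by linarith
  qed
  have key: "s \<in> F \<and> (\<forall>t \<in> set_pmf (bind_pmf (\<pi>1 s) (\<lambda>a. \<delta> s a (\<pi>2 s))). t \<in> S \<and> P1 t \<in> ?W)"
    if sS: "s \<in> S" and sW: "P1 s \<in> ?W" for s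
  proof -
    have sV: "P1 s \<in> ?V" using sW by (simp add: tb_as_win_set_def)
    have "tb_safe_steps ?succ ?Fb ?s1 \<sigma>d 0 [P1 s] = 1" using allone[OF \<sigma>d_strat sW] .
    then have sF: "s \<in> F" by (auto simp: TB_safe_def split: if_splits)
    have "f1 (P1 s) \<in> ?succ (P1 s)" using f1_move sV by auto
    then obtain A B where f1s: "f1 (P1 s) = P2 s A B" and AB: "(A, B) \<in> OptSelCount S \<Gamma>1 \<Gamma>2 \<delta> v s"
      by auto
    have A: "set_pmf (\<pi>1 s) = A" and B: "CountOpt S \<Gamma>1 \<Gamma>2 \<delta> v s (\<pi>1 s) = B"
      using \<pi>1_TB sS sW f1s by auto
    define b where "b = \<pi>2 s"
    have bB: "b \<in> B" using \<pi>2_opt sS sW B by (auto simp: b_def)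
    have bG: "b \<in> \<Gamma>2 s" using \<pi>2_sel sS by (simp add: b_def)
    define T0 where "T0 = (\<Union>a\<in>A. Dest \<delta> s a b)"
    have T0S: "T0 \<subseteq> S" using Gd sS bG \<pi>1_sel A by (force simp: T0_def Dest_def)
    have finS: "finite S" using G by (simp add: cgs_def)
    have finT: "finite (P1 ` T0)" using finite_subset[OF T0S finS] by simp
    have neT: "P1 ` T0 \<noteq> {}"
    proof -
      obtain a where "a \<in> set_pmf (\<pi>1 s)" using set_pmf_not_empty by fast
      moreover obtain t where "t \<in> set_pmf (\<delta> s a b)" using set_pmf_not_empty by fast
      ultimately show ?thesis using A by (auto simp: T0_def Dest_def)
    qed
    have winT: "P1 t \<in> ?W" if tT: "t \<in> T0" for t
    proof -
      have tV: "P1 t \<in> ?V" using tT T0S by (auto simp: TB_states_def)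
      have "tb_prob_safe ?succ ?Fb ?s1 \<sigma>2' (P1 t) = 1" if \<sigma>2': "tb_strategy ?V is_P2 ?succ \<sigma>2'" for \<sigma>2'
      proof -
        define pre where "pre = [P1 s, P2 s A B, Rnd s A b]"
        define \<sigma>2 where "\<sigma>2 h = (if 3 < length h \<and> take 3 h = pre then \<sigma>2' (drop 3 h)
             else if h = [P1 s, P2 s A B] then return_pmf (Rnd s A b) else \<sigma>d h)" for h
        have sh2: "\<sigma>2 (pre @ h) = \<sigma>2' h" if "h \<noteq> []" for h
          using that by (simp add: \<sigma>2_def pre_def)
        have sh1: "?s1 (pre @ h) = ?s1 h" if "h \<noteq> []" for h
          using that by (simp add: pure_memoryless_def)
        have \<sigma>2_strat: "tb_strategy ?V is_P2 ?succ \<sigma>2"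
          unfolding tb_strategy_def
        proof (intro allI impI)
          fix h :: "('s, 'm) tbv list"
          assume h: "h \<noteq> [] \<and> last h \<in> ?V \<and> is_P2 (last h)"
          show "set_pmf (\<sigma>2 h) \<subseteq> ?succ (last h)"
          proof (cases "3 < length h \<and> take 3 h = pre")
            case True
            then have "h = pre @ drop 3 h" "drop 3 h \<noteq> []"
              by (metis append_take_drop_id) (use True in auto)
            then have "last h = last (drop 3 h)" by (metis last_appendR)
            moreover have "\<sigma>2 h = \<sigma>2' (drop 3 h)" using True by (simp add: \<sigma>2_def)
            moreover have "set_pmf (\<sigma>2' (drop 3 h)) \<subseteq> ?succ (last (drop 3 h))"
              using \<sigma>2' h \<open>drop 3 h \<noteq> []\<close> \<open>last h = last (drop 3 h)\<close>
              unfolding tb_strategy_def by (metis (no_types, lifting))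
            ultimately show ?thesis by simp
          next
            case False
            then show ?thesis using h bB \<sigma>d_ok by (auto simp: \<sigma>2_def)
          qed
        qed
        have one: "tb_safe_steps ?succ ?Fb ?s1 \<sigma>2 (Suc (Suc (Suc n))) [P1 s] = 1" for n
          using allone[OF \<sigma>2_strat sW] .
        have eq: "tb_safe_steps ?succ ?Fb ?s1 \<sigma>2 (Suc (Suc (Suc n))) [P1 s]
             = sum (\<lambda>x. tb_safe_steps ?succ ?Fb ?s1 \<sigma>2' n [x]) (P1 ` T0) / card (P1 ` T0 :: ('s, 'm) tbv set)" for n
        proof -
          have inF: "P1 s \<in> ?Fb" "P2 s A B \<in> ?Fb" "Rnd s A b \<in> ?Fb" using sF by (auto simp: TB_safe_def)
          have n1: "tb_next ?succ ?s1 \<sigma>2 [P1 s] = return_pmf (P2 s A B)"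
            by (simp add: tb_next_def pure_memoryless_def f1s)
          have n2: "tb_next ?succ ?s1 \<sigma>2 [P1 s, P2 s A B] = return_pmf (Rnd s A b)"
            by (simp add: tb_next_def \<sigma>2_def)
          have succR: "?succ (Rnd s A b) = P1 ` T0" by (simp add: T0_def)
          have n3: "tb_next ?succ ?s1 \<sigma>2 [P1 s, P2 s A B, Rnd s A b] = pmf_of_set (P1 ` T0)"
            by (simp add: tb_next_def T0_def)
          have "tb_safe_steps ?succ ?Fb ?s1 \<sigma>2 (Suc (Suc (Suc n))) [P1 s]
              = measure_pmf.expectation (pmf_of_set (P1 ` T0))
                  (\<lambda>x. tb_safe_steps ?succ ?Fb ?s1 \<sigma>2 n (pre @ [x]))"
            using inF by (simp add: n1 n2 n3 pre_def)
          also have "\<dots> = measure_pmf.expectation (pmf_of_set (P1 ` T0))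
                  (\<lambda>x. tb_safe_steps ?succ ?Fb ?s1 \<sigma>2' n [x])"
          proof -
            have "tb_safe_steps ?succ ?Fb ?s1 \<sigma>2 n (pre @ [x]) = tb_safe_steps ?succ ?Fb ?s1 \<sigma>2' n [x]" for x
              by (rule tb_shift) (use sh1 sh2 in auto)
            then show ?thesis by simp
          qed
          also have "\<dots> = sum (\<lambda>x. tb_safe_steps ?succ ?Fb ?s1 \<sigma>2' n [x]) (P1 ` T0) / card (P1 ` T0 :: ('s, 'm) tbv set)"
            by (rule integral_pmf_of_set[OF neT finT])
          finally show ?thesis .
        qed
        have "tb_safe_steps ?succ ?Fb ?s1 \<sigma>2' n [P1 t] = 1" for n
        proof -
          have avg: "sum (\<lambda>x. tb_safe_steps ?succ ?Fb ?s1 \<sigma>2' n [x]) (P1 ` T0) / card (P1 ` T0 :: ('s, 'm) tbv set) = 1"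
            using one[of n] eq[of n] by simp
          show ?thesis
            by (rule sum_avg_one[OF finT neT _ avg]) (simp_all add: tb_bounds tT)
        qed
        then show ?thesis by (simp add: tb_prob_safe_def)
      qed
      then have "tb_as_winning_from ?V ?succ ?Fb ?s1 {P1 t}"
        using s1_strat unfolding tb_as_winning_from_def by blast
      then show ?thesis using tV unfolding tb_as_win_set_def by blast
    qed
    have "t \<in> S \<and> P1 t \<in> ?W" if "t \<in> set_pmf (bind_pmf (\<pi>1 s) (\<lambda>a. \<delta> s a (\<pi>2 s)))" for t
    proof -
      have "t \<in> T0" using that A unfolding T0_def Dest_def b_def by (auto simp: set_bind_pmf)
      then show ?thesis using winT T0S by auto
    qed
    then show ?thesis using sF by blast
  qed
  have main: "\<forall>s\<in>S. P1 s \<in> ?W \<longrightarrow> safe_steps_cgs \<delta> F \<pi>1 \<pi>2 n s = 1" for n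
  proof (induction n)
    case 0
    show ?case
    proof (intro ballI impI)
      fix s assume "s \<in> S" "P1 s \<in> ?W"
      then have "s \<in> F" using key[of s] by blast
      then show "safe_steps_cgs \<delta> F \<pi>1 \<pi>2 0 s = 1" by simp
    qed
  next
    case (Suc n)
    show ?case
    proof (intro ballI impI)
      fix s assume sS: "s \<in> S" and sW: "P1 s \<in> ?W"
      have sF: "s \<in> F" using key[OF sS sW] by blast
      have "measure_pmf.expectation (bind_pmf (\<pi>1 s) (\<lambda>a. \<delta> s a (\<pi>2 s))) (safe_steps_cgs \<delta> F \<pi>1 \<pi>2 n) = 1"
      proof (rule exp_eq1)
        fix t assume "t \<in> set_pmf (bind_pmf (\<pi>1 s) (\<lambda>a. \<delta> s a (\<pi>2 s)))"
        then have "t \<in> S" "P1 t \<in> ?W" using key[OF sS sW] by blast+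
        then show "safe_steps_cgs \<delta> F \<pi>1 \<pi>2 n t = 1" using Suc.IH by blast
      qed
      then show "safe_steps_cgs \<delta> F \<pi>1 \<pi>2 (Suc n) s = 1" using sF by simp
    qed
  qed
  show ?thesis
  proof (intro ballI impI)
    fix s assume "s \<in> S" "P1 s \<in> ?W"
    then have "\<And>n. safe_steps_cgs \<delta> F \<pi>1 \<pi>2 n s = 1" using main by blast
    then show "prob_safe_cgs \<delta> F \<pi>1 \<pi>2 s = 1" by (simp add: prob_safe_cgs_def)
  qed
qed

end
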